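(* Let $G$ be a torsion-free group, $\mathbb{F}$ a field, $\alpha$ a zero divisor in $\mathbb{F}[G]$ and $\beta$ a mate of $\alpha$. If $|supp(\alpha)|\le 5$, then $\langle h^{-1}supp(\alpha)\rangle=\langle supp(\beta)g^{-1}\rangle$ for all $h\in supp(\alpha)$ and all $g\in supp(\beta)$.
   Context: A zero divisor is a non-zero $\alpha$ with $\alpha\beta'=0$ for some non-zero $\beta'$. A mate of $\alpha$ is a non-zero $\beta\in\mathbb{F}[G]$ with $\alpha\beta=0$ such that $|supp(\beta)|\le|supp(\beta')|$ for every non-zero $\beta'\in\mathbb{F}[G]$ with $\alpha\beta'=0$. Here $supp(\gamma)=\{x\in G:\gamma_x\ne0\}$. *)

theory Defs
  imports "HOL-Algebra.Algebra"
begin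

text \<open>Group algebra F[G] over a field (type class field) of a group G (HOL-Algebra locale).
  Elements are finitely supported functions carrier G to F, vanishing outside carrier G.\<close>

definition torsion_free :: "('g, 'b) monoid_scheme \<Rightarrow> bool" where
  "torsion_free G \<longleftrightarrow>
     (\<forall>x\<in>carrier G. x \<noteq> \<one>\<^bsub>G\<^esub> \<longrightarrow> (\<forall>n::nat. n > 0 \<longrightarrow> x [^]\<^bsub>G\<^esub> n \<noteq> \<one>\<^bsub>G\<^esub>))"

definition supp :: "('g \<Rightarrow> 'f::zero) \<Rightarrow> 'g set" where
  "supp a = {x. a x \<noteq> 0}"

definition gr_elem :: "('g, 'b) monoid_scheme \<Rightarrow> ('g \<Rightarrow> 'f::zero) \<Rightarrow> bool" where
  "gr_elem G a \<longleftrightarrow> finite (supp a) \<and> supp a \<subseteq> carrier G"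

definition gr_mult :: "('g, 'b) monoid_scheme \<Rightarrow> ('g \<Rightarrow> 'f::field) \<Rightarrow> ('g \<Rightarrow> 'f) \<Rightarrow> ('g \<Rightarrow> 'f)" where
  "gr_mult G a b = (\<lambda>x. if x \<in> carrier G
       then (\<Sum>y\<in>supp a. a y * b (inv\<^bsub>G\<^esub> y \<otimes>\<^bsub>G\<^esub> x)) else 0)"

definition zero_divisor :: "('g, 'b) monoid_scheme \<Rightarrow> ('g \<Rightarrow> 'f::field) \<Rightarrow> bool" where
  "zero_divisor G \<alpha> \<longleftrightarrow> gr_elem G \<alpha> \<and> \<alpha> \<noteq> (\<lambda>_. 0) \<and>
     (\<exists>\<beta>'. gr_elem G \<beta>' \<and> \<beta>' \<noteq> (\<lambda>_. 0) \<and> gr_mult G \<alpha> \<beta>' = (\<lambda>_. 0))"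

definition mate :: "('g, 'b) monoid_scheme \<Rightarrow> ('g \<Rightarrow> 'f::field) \<Rightarrow> ('g \<Rightarrow> 'f) \<Rightarrow> bool" where
  "mate G \<alpha> \<beta> \<longleftrightarrow> gr_elem G \<beta> \<and> \<beta> \<noteq> (\<lambda>_. 0) \<and> gr_mult G \<alpha> \<beta> = (\<lambda>_. 0) \<and>
     (\<forall>\<beta>'. gr_elem G \<beta>' \<and> \<beta>' \<noteq> (\<lambda>_. 0) \<and> gr_mult G \<alpha> \<beta>' = (\<lambda>_. 0)
        \<longrightarrow> card (supp \<beta>) \<le> card (supp \<beta>'))"

end

theory Submission
  imports Defs
begin

lemma gr_mult_sum:
  assumes "finite A" "supp a \<subseteq> A" "x \<in> carrier G"
  shows "gr_mult G a b x = (\<Sum>y\<in>A. a y * b (inv\<^bsub>G\<^esub> y \<otimes>\<^bsub>G\<^esub> x))"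
  unfolding gr_mult_def using assms
  by (auto intro!: sum.mono_neutral_left simp: supp_def)

lemma small_not_zd:
  fixes G :: "('g, 'c) monoid_scheme" (structure) and a b :: "'g \<Rightarrow> 'f::field"
  assumes grp: "group G" and tf: "torsion_free G"
    and ga: "gr_elem G a" and an: "a \<noteq> (\<lambda>_. 0)" and c: "card (supp a) \<le> 2"
    and gb: "gr_elem G b" and ab: "gr_mult G a b = (\<lambda>_. 0)"
  shows "b = (\<lambda>_. 0)"
proof -
  interpret group G by (rule grp)
  have fa: "finite (supp a)" and sa: "supp a \<subseteq> carrier G" using ga by (auto simp: gr_elem_def)
  have fb: "finite (supp b)" and sb: "supp b \<subseteq> carrier G" using gb by (auto simp: gr_elem_def)
  have ne: "supp a \<noteq> {}" using an by (auto simp: supp_def)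
  then have "card (supp a) \<noteq> 0" using fa by simp
  with c have "card (supp a) = 1 \<or> card (supp a) = 2" by linarith
  then show ?thesis
  proof
    assume "card (supp a) = 1"
    then obtain x where sx: "supp a = {x}" by (auto simp: card_Suc_eq)
    have xc: "x \<in> carrier G" using sx sa by auto
    have ax: "a x \<noteq> 0" using sx by (auto simp: supp_def)
    show ?thesis
    proof
      fix z
      show "b z = 0"
      proof (cases "z \<in> carrier G")
        case True
        have "gr_mult G a b (x \<otimes> z) = 0" using ab by simp
        moreover have "gr_mult G a b (x \<otimes> z) = a x * b (inv x \<otimes> (x \<otimes> z))"
          using True xc by (simp add: gr_mult_def sx)
        moreover have "inv x \<otimes> (x \<otimes> z) = z" using True xc
          by (simp add: m_assoc[symmetric])
        ultimately show ?thesis using ax by simp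
      next
        case False then show ?thesis using sb by (auto simp: supp_def)
      qed
    qed
  next
    assume "card (supp a) = 2"
    then obtain x y where sxy: "supp a = {x, y}" and xy: "x \<noteq> y" by (auto simp: card_Suc_eq numeral_2_eq_2)
    have xc: "x \<in> carrier G" and yc: "y \<in> carrier G" using sxy sa by auto
    have ax: "a x \<noteq> 0" and ay: "a y \<noteq> 0" using sxy by (auto simp: supp_def)
    define t where "t = inv y \<otimes> x"
    have tc: "t \<in> carrier G" using xc yc by (simp add: t_def)
    have t1: "t \<noteq> \<one>"
    proof
      assume "t = \<one>"
      then have "y \<otimes> t = y" using yc by simp
      moreover have "y \<otimes> t = x" using xc yc by (simp add: t_def m_assoc[symmetric])
      ultimately show False using xy by simp
    qed
    have step: "t \<otimes> z \<in> supp b" if z: "z \<in> supp b" for z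
    proof -
      have zc: "z \<in> carrier G" using z sb by auto
      define w where "w = x \<otimes> z"
      have wc: "w \<in> carrier G" using xc zc by (simp add: w_def)
      have "gr_mult G a b w = a x * b (inv x \<otimes> w) + a y * b (inv y \<otimes> w)"
        using wc xy by (simp add: gr_mult_def sxy)
      moreover have "inv x \<otimes> w = z" using xc zc by (simp add: w_def m_assoc[symmetric])
      moreover have "inv y \<otimes> w = t \<otimes> z" using xc yc zc by (simp add: w_def t_def m_assoc)
      moreover have "gr_mult G a b w = 0" using ab by simp
      ultimately have "a x * b z + a y * b (t \<otimes> z) = 0" by simp
      moreover have "a x * b z \<noteq> 0" using ax z by (simp add: supp_def)
      ultimately have "a y * b (t \<otimes> z) \<noteq> 0" by (metis add.right_neutral)
      then show ?thesis by (simp add: supp_def)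
    qed
    show ?thesis
    proof (rule ccontr)
      assume "b \<noteq> (\<lambda>_. 0)"
      then obtain z where z: "z \<in> supp b" by (auto simp: supp_def)
      have zc: "z \<in> carrier G" using z sb by auto
      have pw: "t [^] n \<otimes> z \<in> supp b" for n :: nat
      proof (induct n)
        case 0 then show ?case using z zc by simp
      next
        case (Suc n)
        have "t [^] Suc n \<otimes> z = t \<otimes> (t [^] n \<otimes> z)"
          using tc zc by (metis nat_pow_Suc2 m_assoc nat_pow_closed)
        then show ?case using step[OF Suc] by simp
      qed
      have "\<not> inj (\<lambda>n::nat. t [^] n \<otimes> z)"
      proof
        assume "inj (\<lambda>n::nat. t [^] n \<otimes> z)"
        moreover have "finite (range (\<lambda>n::nat. t [^] n \<otimes> z))"
          using pw fb by (meson finite_subset image_subsetI)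
        ultimately have "finite (UNIV :: nat set)" using finite_imageD by blast
        then show False by simp
      qed
      then obtain m n :: nat where mn: "m \<noteq> n" "t [^] m \<otimes> z = t [^] n \<otimes> z"
        by (auto simp: inj_def)
      then have e: "t [^] m = t [^] n" using tc zc by simp
      have "t [^] (m - n) = \<one>" "t [^] (n - m) = \<one>"
        using pow_eq_div2[OF tc e] pow_eq_div2[OF tc e[symmetric]] by auto
      moreover have "m - n > 0 \<or> n - m > 0" using mn by arith
      ultimately show False using tf tc t1 unfolding torsion_free_def by metis
    qed
  qed
qed

lemma sub_right_iff:
  fixes G (structure)
  assumes grp: "group G" and K: "subgroup K G" and k: "k \<in> K" and a: "a \<in> carrier G"
  shows "a \<otimes>\<^bsub>G\<^esub> k \<in> K \<longleftrightarrow> a \<in> K"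
proof -
  interpret group G by (rule grp)
  have kc: "k \<in> carrier G" using K k subgroup.subset by blast
  show ?thesis
  proof
    assume "a \<otimes> k \<in> K"
    then have "(a \<otimes> k) \<otimes> inv k \<in> K" using K k subgroup.m_closed subgroup.m_inv_closed by metis
    then show "a \<in> K" using kc a by (simp add: m_assoc)
  next
    assume "a \<in> K" then show "a \<otimes> k \<in> K" using K k subgroup.m_closed by metis
  qed
qed

lemma sub_left_iff:
  fixes G (structure)
  assumes grp: "group G" and K: "subgroup K G" and k: "k \<in> K" and a: "a \<in> carrier G"
  shows "k \<otimes>\<^bsub>G\<^esub> a \<in> K \<longleftrightarrow> a \<in> K"
proof -
  interpret group G by (rule grp)
  have kc: "k \<in> carrier G" using K k subgroup.subset by blast
  show ?thesis
  proof
    assume "k \<otimes> a \<in> K"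
    then have "inv k \<otimes> (k \<otimes> a) \<in> K" using K k subgroup.m_closed subgroup.m_inv_closed by metis
    then show "a \<in> K" using kc a by (simp add: m_assoc[symmetric])
  next
    assume "a \<in> K" then show "k \<otimes> a \<in> K" using K k subgroup.m_closed by metis
  qed
qed

lemma main_aux:
  fixes G :: "('g, 'b) monoid_scheme" (structure) and \<alpha> \<beta> :: "'g \<Rightarrow> 'f::field"
  assumes "group G" and "torsion_free G"
    and "zero_divisor G \<alpha>" and "mate G \<alpha> \<beta>"
    and "card (supp \<alpha>) \<le> 5"
  shows "\<forall>h\<in>supp \<alpha>. \<forall>g\<in>supp \<beta>.
     generate G ((\<lambda>x. inv\<^bsub>G\<^esub> h \<otimes>\<^bsub>G\<^esub> x) ` supp \<alpha>) =
     generate G ((\<lambda>x. x \<otimes>\<^bsub>G\<^esub> inv\<^bsub>G\<^esub> g) ` supp \<beta>)"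
proof (intro ballI)
  interpret group G by (rule assms(1))
  fix h g assume h: "h \<in> supp \<alpha>" and g: "g \<in> supp \<beta>"
  have ga: "gr_elem G \<alpha>" and an: "\<alpha> \<noteq> (\<lambda>_. 0)" using assms(3) by (auto simp: zero_divisor_def)
  have gb: "gr_elem G \<beta>" and bn: "\<beta> \<noteq> (\<lambda>_. 0)" and ab: "gr_mult G \<alpha> \<beta> = (\<lambda>_. 0)"
    and mn: "\<And>\<beta>'. gr_elem G \<beta>' \<Longrightarrow> \<beta>' \<noteq> (\<lambda>_. 0) \<Longrightarrow> gr_mult G \<alpha> \<beta>' = (\<lambda>_. 0)
        \<Longrightarrow> card (supp \<beta>) \<le> card (supp \<beta>')"
    using assms(4) unfolding mate_def by blast+
  have fa: "finite (supp \<alpha>)" and sa: "supp \<alpha> \<subseteq> carrier G" using ga by (auto simp: gr_elem_def)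
  have fb: "finite (supp \<beta>)" and sb: "supp \<beta> \<subseteq> carrier G" using gb by (auto simp: gr_elem_def)
  have hc: "h \<in> carrier G" using h sa by auto
  have gc: "g \<in> carrier G" using g sb by auto
  define A where "A = (\<lambda>x. inv h \<otimes> x) ` supp \<alpha>"
  define B where "B = (\<lambda>x. x \<otimes> inv g) ` supp \<beta>"
  have Ac: "A \<subseteq> carrier G" using sa hc by (auto simp: A_def)
  have Bc: "B \<subseteq> carrier G" using sb gc by (auto simp: B_def)
  define H where "H = generate G A"
  define K where "K = generate G B"
  have subH: "subgroup H G" unfolding H_def by (rule generate_is_subgroup[OF Ac])
  have subK: "subgroup K G" unfolding K_def by (rule generate_is_subgroup[OF Bc])
  have AH: "A \<subseteq> H" unfolding H_def by (rule subsetI, erule generate.incl)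
  have BK: "B \<subseteq> K" unfolding K_def by (rule subsetI, erule generate.incl)
  have zero_out: "\<And>a b w. w \<notin> carrier G \<Longrightarrow> gr_mult G a b w = 0" by (simp add: gr_mult_def)
  have AK: "A \<subseteq> K"
  proof (rule ccontr)
    assume "\<not> A \<subseteq> K"
    then obtain x where x: "x \<in> supp \<alpha>" and xK: "inv h \<otimes> x \<notin> K" by (auto simp: A_def)
    define P where "P = (\<lambda>y. inv h \<otimes> y \<in> K)"
    define Q where "Q = (\<lambda>w. inv h \<otimes> w \<otimes> inv g \<in> K)"
    define a1 where "a1 = (\<lambda>y. if P y then \<alpha> y else 0)"
    define a2 where "a2 = (\<lambda>y. if P y then 0 else \<alpha> y)"
    have s1: "supp a1 = {y \<in> supp \<alpha>. P y}" by (auto simp: supp_def a1_def)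
    have s2: "supp a2 = {y \<in> supp \<alpha>. \<not> P y}" by (auto simp: supp_def a2_def)
    have key: "P y \<longleftrightarrow> Q w" if y: "y \<in> supp \<alpha>" and w: "w \<in> carrier G"
      and nz: "\<beta> (inv y \<otimes> w) \<noteq> 0" for y w
    proof -
      have yc: "y \<in> carrier G" using y sa by auto
      have sB: "inv y \<otimes> w \<in> supp \<beta>" using nz by (simp add: supp_def)
      then have k: "(inv y \<otimes> w) \<otimes> inv g \<in> K" using BK by (auto simp: B_def)
      have "inv h \<otimes> w \<otimes> inv g = (inv h \<otimes> y) \<otimes> ((inv y \<otimes> w) \<otimes> inv g)"
      proof -
        have "y \<otimes> (inv y \<otimes> (w \<otimes> inv g)) = w \<otimes> inv g"
          using yc w gc by (simp add: m_assoc[symmetric])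
        then show ?thesis using yc w hc gc by (simp add: m_assoc)
      qed
      then show ?thesis unfolding P_def Q_def
        using sub_right_iff[OF assms(1) subK k] yc hc by simp
    qed
    have m1: "gr_mult G a1 \<beta> = (\<lambda>_. 0)"
    proof
      fix w show "gr_mult G a1 \<beta> w = 0"
      proof (cases "w \<in> carrier G")
        case True
        have "gr_mult G a1 \<beta> w = (\<Sum>y\<in>supp \<alpha>. a1 y * \<beta> (inv y \<otimes> w))"
          by (rule gr_mult_sum[OF fa _ True]) (auto simp: s1)
        also have "\<dots> = (\<Sum>y\<in>supp \<alpha>. if Q w then \<alpha> y * \<beta> (inv y \<otimes> w) else 0)"
          by (rule sum.cong) (use key True in \<open>auto simp: a1_def\<close>)
        also have "\<dots> = (if Q w then gr_mult G \<alpha> \<beta> w else 0)"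
          using gr_mult_sum[OF fa _ True, of \<alpha>] by simp
        finally show ?thesis using ab by simp
      qed (simp add: zero_out)
    qed
    have m2: "gr_mult G a2 \<beta> = (\<lambda>_. 0)"
    proof
      fix w show "gr_mult G a2 \<beta> w = 0"
      proof (cases "w \<in> carrier G")
        case True
        have "gr_mult G a2 \<beta> w = (\<Sum>y\<in>supp \<alpha>. a2 y * \<beta> (inv y \<otimes> w))"
          by (rule gr_mult_sum[OF fa _ True]) (auto simp: s2)
        also have "\<dots> = (\<Sum>y\<in>supp \<alpha>. if Q w then 0 else \<alpha> y * \<beta> (inv y \<otimes> w))"
          by (rule sum.cong) (use key True in \<open>auto simp: a2_def\<close>)
        also have "\<dots> = (if Q w then 0 else gr_mult G \<alpha> \<beta> w)"
          using gr_mult_sum[OF fa _ True, of \<alpha>] by simp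
        finally show ?thesis using ab by simp
      qed (simp add: zero_out)
    qed
    have Ph: "P h" using hc subgroup.one_closed[OF subK] by (simp add: P_def)
    have n1: "a1 \<noteq> (\<lambda>_. 0)" using Ph h by (auto simp: a1_def supp_def fun_eq_iff)
    have n2: "a2 \<noteq> (\<lambda>_. 0)" using xK x by (auto simp: a2_def supp_def fun_eq_iff P_def)
    have g1: "gr_elem G a1" using fa sa by (auto simp: gr_elem_def s1)
    have g2: "gr_elem G a2" using fa sa by (auto simp: gr_elem_def s2)
    have "card (supp a1) + card (supp a2) = card (supp a1 \<union> supp a2)"
      by (rule card_Un_disjoint[symmetric]) (use fa in \<open>auto simp: s1 s2\<close>)
    also have "supp a1 \<union> supp a2 = supp \<alpha>" by (auto simp: s1 s2)
    finally have "card (supp a1) + card (supp a2) = card (supp \<alpha>)" .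
    then have "card (supp a1) \<le> 2 \<or> card (supp a2) \<le> 2" using assms(5) by linarith
    then show False
      using small_not_zd[OF assms(1,2) g1 n1 _ gb m1] small_not_zd[OF assms(1,2) g2 n2 _ gb m2] bn
      by blast
  qed
  have BH: "B \<subseteq> H"
  proof (rule ccontr)
    assume "\<not> B \<subseteq> H"
    then obtain s where s: "s \<in> supp \<beta>" and sH: "s \<otimes> inv g \<notin> H" by (auto simp: B_def)
    define R where "R = (\<lambda>z. z \<otimes> inv g \<in> H)"
    define Q where "Q = (\<lambda>w. inv h \<otimes> w \<otimes> inv g \<in> H)"
    define b1 where "b1 = (\<lambda>z. if R z then \<beta> z else 0)"
    have s1: "supp b1 = {z \<in> supp \<beta>. R z}" by (auto simp: supp_def b1_def)
    have key: "R (inv y \<otimes> w) \<longleftrightarrow> Q w" if y: "y \<in> supp \<alpha>" and w: "w \<in> carrier G" for y w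
    proof -
      have yc: "y \<in> carrier G" using y sa by auto
      have k: "inv h \<otimes> y \<in> H" using AH y by (auto simp: A_def)
      have "inv h \<otimes> w \<otimes> inv g = (inv h \<otimes> y) \<otimes> ((inv y \<otimes> w) \<otimes> inv g)"
      proof -
        have "y \<otimes> (inv y \<otimes> (w \<otimes> inv g)) = w \<otimes> inv g"
          using yc w gc by (simp add: m_assoc[symmetric])
        then show ?thesis using yc w hc gc by (simp add: m_assoc)
      qed
      then show ?thesis unfolding R_def Q_def
        using sub_left_iff[OF assms(1) subH k] yc w gc by simp
    qed
    have m1: "gr_mult G \<alpha> b1 = (\<lambda>_. 0)"
    proof
      fix w show "gr_mult G \<alpha> b1 w = 0"
      proof (cases "w \<in> carrier G")
        case True
        have "gr_mult G \<alpha> b1 w = (\<Sum>y\<in>supp \<alpha>. \<alpha> y * b1 (inv y \<otimes> w))"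
          by (rule gr_mult_sum[OF fa _ True]) auto
        also have "\<dots> = (\<Sum>y\<in>supp \<alpha>. if Q w then \<alpha> y * \<beta> (inv y \<otimes> w) else 0)"
          by (rule sum.cong) (use key True in \<open>auto simp: b1_def\<close>)
        also have "\<dots> = (if Q w then gr_mult G \<alpha> \<beta> w else 0)"
          using gr_mult_sum[OF fa _ True, of \<alpha>] by simp
        finally show ?thesis using ab by simp
      qed (simp add: zero_out)
    qed
    have Rg: "R g" using gc subgroup.one_closed[OF subH] by (simp add: R_def)
    have n1: "b1 \<noteq> (\<lambda>_. 0)" using Rg g by (auto simp: b1_def supp_def fun_eq_iff)
    have g1: "gr_elem G b1" using fb sb by (auto simp: gr_elem_def s1)
    have "supp b1 \<subset> supp \<beta>" using s sH by (auto simp: s1 R_def)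
    then have "card (supp b1) < card (supp \<beta>)" using psubset_card_mono[OF fb] by blast
    moreover have "card (supp \<beta>) \<le> card (supp b1)" by (rule mn[OF g1 n1 m1])
    ultimately show False by simp
  qed
  have "H \<subseteq> K" unfolding H_def by (rule generate_subgroup_incl[OF AK subK])
  moreover have "K \<subseteq> H" unfolding K_def by (rule generate_subgroup_incl[OF BH subH])
  ultimately have "H = K" by blast
  then show "generate G ((\<lambda>x. inv h \<otimes> x) ` supp \<alpha>) = generate G ((\<lambda>x. x \<otimes> inv g) ` supp \<beta>)"
    unfolding H_def K_def A_def B_def .
qed

theorem mainTheorem6:
  fixes G :: "('g, 'b) monoid_scheme" and \<alpha> \<beta> :: "'g \<Rightarrow> 'f::field"
  assumes "group G" and "torsion_free G"
    and "zero_divisor G \<alpha>" and "mate G \<alpha> \<beta>"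
    and "card (supp \<alpha>) \<le> 5"
  shows "\<forall>h\<in>supp \<alpha>. \<forall>g\<in>supp \<beta>.
     generate G ((\<lambda>x. inv\<^bsub>G\<^esub> h \<otimes>\<^bsub>G\<^esub> x) ` supp \<alpha>) =
     generate G ((\<lambda>x. x \<otimes>\<^bsub>G\<^esub> inv\<^bsub>G\<^esub> g) ` supp \<beta>)"
  using main_aux[OF assms] .

end
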